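(* Let $n\ge 1$ and let $\sigma$ be any permutation of $\{1,\dots,n\}$. Let $P_\sigma$ be the unitary on $n$ qubits that permutes the qubits according to $\sigma$, i.e. $P_\sigma|b_1 b_2\cdots b_n\rangle = |b_{\sigma^{-1}(1)} b_{\sigma^{-1}(2)}\cdots b_{\sigma^{-1}(n)}\rangle$ for all $b_i\in\{0,1\}$. Then: (i) $P_\sigma$ can be embedded, using $n$ ancillae, in a circuit consisting of 4 layers each of which contains only controlled-not gates (acting on disjoint pairs of qubits); (ii) $P_\sigma$ is equal (with no ancillae) to a circuit consisting of 6 layers each of which contains only controlled-not gates (acting on disjoint pairs of qubits).
   Context: Qubits have computational basis $|0\rangle,|1\rangle$; an operator on $n$ qubits is a $2^n\times 2^n$ unitary matrix indexed by bit strings. The controlled-not gate is the two-qubit unitary $\mathrm{diag}$-block matrix $\begin{pmatrix}1&0&0&0\\0&1&0&0\\0&0&0&1\\0&0&1&0\end{pmatrix}$ (first qubit = control, second = target), i.e. $|a,b\rangle\mapsto|a,a\oplus b\rangle$. A layer is a tensor product of gates acting on pairwise disjoint sets of qubits (qubits not acted on are left unchanged); a circuit of $k$ layers is the product of $k$ layers. An operator $F$ on $n$ qubits is embedded in an operator $M$ on $n+m$ qubits using $m$ ancillae if $M$ maps the subspace where all $m$ ancilla qubits are $|0\rangle$ into itself and, restricted to that subspace, equals $F\otimes \mathbf{1}$ (i.e. $M(|\psi\rangle\otimes|0\cdots0\rangle)=(F|\psi\rangle)\otimes|0\cdots 0\rangle$ for all $|\psi\rangle$). *)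

theory Defs
  imports Complex_Main "HOL-Combinatorics.Permutations"
begin

text \<open>Qubits are indexed 0,1,...,N-1. A computational basis state of N qubits is a bit
  assignment b :: nat => bool vanishing (False) outside {0..<N}. An operator on N qubits is a
  matrix indexed by basis states: entry M x y is the coefficient of basis state x in M applied
  to basis state y.\<close>

type_synonym bits = "nat \<Rightarrow> bool"
type_synonym qop = "bits \<Rightarrow> bits \<Rightarrow> complex"

definition basis :: "nat \<Rightarrow> bits set" where
  "basis N = {b. \<forall>i\<ge>N. \<not> b i}"

definition op_mult :: "nat \<Rightarrow> qop \<Rightarrow> qop \<Rightarrow> qop" where
  "op_mult N A B = (\<lambda>x z. \<Sum>y\<in>basis N. A x y * B y z)"

definition op_id :: qop where
  "op_id = (\<lambda>x y. if x = y then 1 else 0)"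

definition op_apply :: "nat \<Rightarrow> qop \<Rightarrow> (bits \<Rightarrow> complex) \<Rightarrow> (bits \<Rightarrow> complex)" where
  "op_apply N M \<psi> = (\<lambda>x. \<Sum>y\<in>basis N. M x y * \<psi> y)"

definition cnot :: "nat \<Rightarrow> nat \<Rightarrow> qop" where
  "cnot c t = (\<lambda>x y. if x = y(t := (y t \<noteq> y c)) then 1 else 0)"

text \<open>Its operator is the tensor product of the gates,
  i.e. the product of the (commuting) gates.\<close>
definition cnot_layer :: "nat \<Rightarrow> (nat \<times> nat) list \<Rightarrow> bool" where
  "cnot_layer N L \<longleftrightarrow> (\<forall>(c, t)\<in>set L. c < N \<and> t < N)
      \<and> distinct (concat (map (\<lambda>(c, t). [c, t]) L))"

definition layer_op :: "nat \<Rightarrow> (nat \<times> nat) list \<Rightarrow> qop" where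
  "layer_op N L = foldr (\<lambda>(c, t) M. op_mult N (cnot c t) M) L op_id"

definition circuit_op :: "nat \<Rightarrow> (nat \<times> nat) list list \<Rightarrow> qop" where
  "circuit_op N Ls = foldr (\<lambda>L M. op_mult N (layer_op N L) M) Ls op_id"

definition perm_op :: "nat \<Rightarrow> (nat \<Rightarrow> nat) \<Rightarrow> qop" where
  "perm_op n \<sigma> = (\<lambda>x y. if x = (\<lambda>i. y (inv \<sigma> i)) then 1 else 0)"

text \<open>State psi on n qubits tensored with m ancillae (qubits n..n+m-1) in state |0...0>.\<close>
definition with_zero_ancillae :: "nat \<Rightarrow> (bits \<Rightarrow> complex) \<Rightarrow> (bits \<Rightarrow> complex)" where
  "with_zero_ancillae n \<psi> = (\<lambda>x. if \<forall>i\<ge>n. \<not> x i then \<psi> x else 0)"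

definition embeds :: "nat \<Rightarrow> nat \<Rightarrow> qop \<Rightarrow> qop \<Rightarrow> bool" where
  "embeds n m M F \<longleftrightarrow> (\<forall>\<psi>. \<forall>x\<in>basis (n + m).
      op_apply (n + m) M (with_zero_ancillae n \<psi>) x
      = with_zero_ancillae n (op_apply n F \<psi>) x)"

end

theory Submission
  imports Defs
begin


definition cnotf :: "nat \<Rightarrow> nat \<Rightarrow> bits \<Rightarrow> bits" where
  "cnotf c t y = y(t := (y t \<noteq> y c))"
definition layerf :: "(nat \<times> nat) list \<Rightarrow> bits \<Rightarrow> bits" where
  "layerf L = foldr (\<lambda>(c, t) f. cnotf c t \<circ> f) L id"
definition circf :: "(nat \<times> nat) list list \<Rightarrow> bits \<Rightarrow> bits" where
  "circf Ls = foldr (\<lambda>L f. layerf L \<circ> f) Ls id"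
definition repr :: "nat \<Rightarrow> qop \<Rightarrow> (bits \<Rightarrow> bits) \<Rightarrow> bool" where
  "repr N M g \<longleftrightarrow> (\<forall>x\<in>basis N. \<forall>y\<in>basis N. M x y = (if x = g y then 1 else 0))"
definition pres :: "nat \<Rightarrow> (bits \<Rightarrow> bits) \<Rightarrow> bool" where
  "pres N g \<longleftrightarrow> (\<forall>y\<in>basis N. g y \<in> basis N)"

lemma finite_basis: "finite (basis N)"
proof -
  have "basis N \<subseteq> (\<lambda>S i. i \<in> S) ` Pow {..<N}"
  proof
    fix b assume "b \<in> basis N"
    then have "b = (\<lambda>i. i \<in> {i. i < N \<and> b i})" by (auto simp: basis_def fun_eq_iff) (metis not_le)
    then show "b \<in> (\<lambda>S i. i \<in> S) ` Pow {..<N}" by blast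
  qed
  then show ?thesis by (rule finite_subset) auto
qed

lemma repr_mult:
  assumes "repr N A g" "repr N B h" "pres N h"
  shows "repr N (op_mult N A B) (g \<circ> h)"
  unfolding repr_def
proof (intro ballI)
  fix x z assume x: "x \<in> basis N" and z: "z \<in> basis N"
  have hz: "h z \<in> basis N" using assms(3) z by (auto simp: pres_def)
  have "op_mult N A B x z = (\<Sum>y\<in>basis N. if y = h z then A x y else 0)"
    unfolding op_mult_def
    by (rule sum.cong) (use assms(2) z in \<open>auto simp: repr_def\<close>)
  also have "\<dots> = A x (h z)" using hz finite_basis[of N] by (simp add: sum.delta)
  also have "\<dots> = (if x = (g \<circ> h) z then 1 else 0)" using assms(1) x hz by (auto simp: repr_def)
  finally show "op_mult N A B x z = (if x = (g \<circ> h) z then 1 else 0)" .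
qed

lemma pres_comp: "pres N g \<Longrightarrow> pres N h \<Longrightarrow> pres N (g \<circ> h)"
  by (auto simp: pres_def)

lemma repr_id: "repr N op_id id" by (auto simp: repr_def op_id_def)
lemma pres_id: "pres N id" by (auto simp: pres_def)

lemma repr_cnot: "repr N (cnot c t) (cnotf c t)"
  by (auto simp: repr_def cnot_def cnotf_def)
lemma pres_cnot: "t < N \<Longrightarrow> pres N (cnotf c t)"
  by (auto simp: pres_def basis_def cnotf_def)

lemma layer_op_Cons: "layer_op N ((c,t) # L) = op_mult N (cnot c t) (layer_op N L)"
  by (simp add: layer_op_def)
lemma layerf_Cons: "layerf ((c,t) # L) = cnotf c t \<circ> layerf L"
  by (simp add: layerf_def)
lemma circuit_op_Cons: "circuit_op N (L # Ls) = op_mult N (layer_op N L) (circuit_op N Ls)"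
  by (simp add: circuit_op_def)
lemma circf_Cons: "circf (L # Ls) = layerf L \<circ> circf Ls"
  by (simp add: circf_def)

lemma layer_repr:
  assumes "\<forall>(c, t)\<in>set L. c < N \<and> t < N"
  shows "repr N (layer_op N L) (layerf L) \<and> pres N (layerf L)"
  using assms
proof (induction L)
  case Nil then show ?case using repr_id pres_id by (simp add: layer_op_def layerf_def id_def)
next
  case (Cons a L)
  obtain c t where a: "a = (c, t)" by force
  from Cons have IH: "repr N (layer_op N L) (layerf L)" "pres N (layerf L)" by auto
  have "t < N" using Cons.prems a by auto
  then show ?case using IH
    unfolding a layer_op_Cons layerf_Cons by (blast intro: repr_mult repr_cnot pres_comp pres_cnot)
qed

lemma circ_repr:
  assumes "\<forall>L\<in>set Ls. cnot_layer N L"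
  shows "repr N (circuit_op N Ls) (circf Ls) \<and> pres N (circf Ls)"
  using assms
proof (induction Ls)
  case Nil then show ?case using repr_id pres_id by (simp add: circuit_op_def circf_def id_def)
next
  case (Cons L Ls)
  have "repr N (layer_op N L) (layerf L) \<and> pres N (layerf L)"
    by (rule layer_repr) (use Cons.prems in \<open>auto simp: cnot_layer_def\<close>)
  moreover have "repr N (circuit_op N Ls) (circf Ls) \<and> pres N (circf Ls)"
    using Cons by simp
  ultimately show ?case
    unfolding circuit_op_Cons circf_Cons by (blast intro: repr_mult pres_comp)
qed

definition qubits :: "(nat \<times> nat) list \<Rightarrow> nat list" where
  "qubits L = concat (map (\<lambda>(c, t). [c, t]) L)"

lemma layerf_other: "i \<notin> snd ` set L \<Longrightarrow> layerf L y i = y i"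
  by (induction L) (auto simp: layerf_def cnotf_def)

lemma layerf_target:
  assumes "distinct (qubits L)" "(c, t) \<in> set L"
  shows "layerf L y t = (y t \<noteq> y c)"
  using assms
proof (induction L)
  case Nil then show ?case by simp
next
  case (Cons a L)
  obtain c' t' where a: "a = (c', t')" by force
  show ?case
  proof (cases "a = (c, t)")
    case True
    with Cons.prems have "t \<notin> snd ` set L" "c \<notin> snd ` set L"
      by (force simp: qubits_def)+
    then show ?thesis using True a
      by (simp add: layerf_Cons cnotf_def layerf_other)
  next
    case False
    with Cons.prems a have "(c,t) \<in> set L" "distinct (qubits L)" by (auto simp: qubits_def)
    moreover have "t \<noteq> t'" using Cons.prems a False
      by (auto simp: qubits_def)
    ultimately show ?thesis using Cons.IH a by (simp add: layerf_Cons cnotf_def)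
  qed
qed

lemma distinct_pairs:
  assumes "distinct xs" "inj_on f (set xs)" "inj_on g (set xs)" "\<forall>i\<in>set xs. \<forall>j\<in>set xs. f i \<noteq> g j"
  shows "distinct (concat (map (\<lambda>(c, t). [c, t]) (map (\<lambda>i. (f i, g i)) xs)))"
  using assms
proof (induction xs)
  case Nil then show ?case by simp
next
  case (Cons a xs)
  then show ?case by (auto simp: inj_on_def)
qed


lemma permutes_funpow': "\<sigma> permutes S \<Longrightarrow> (\<sigma> ^^ k) permutes S"
  by (induction k) (auto intro: permutes_compose permutes_id)

lemma perm_finite_order:
  assumes "\<sigma> permutes S" "finite S"
  obtains M where "\<sigma> ^^ Suc M = id"
proof -
  let ?p = "\<lambda>f. \<sigma> \<circ> f"
  have inj: "inj ?p"
  proof (rule injI)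
    fix f g assume "\<sigma> \<circ> f = \<sigma> \<circ> g"
    then have "inv \<sigma> \<circ> \<sigma> \<circ> f = inv \<sigma> \<circ> \<sigma> \<circ> g" by (simp add: comp_assoc)
    then show "f = g" using permutes_inv_o(2)[OF assms(1)] by simp
  qed
  have pw: "(?p ^^ k) id = \<sigma> ^^ k" for k by (induction k) auto
  have "{y. \<exists>k. y = (?p ^^ k) id} \<subseteq> {q. q permutes S}"
    using pw permutes_funpow'[OF assms(1)] by auto
  then have "finite {y. \<exists>k. y = (?p ^^ k) id}"
    using finite_permutations[OF assms(2)] by (rule finite_subset)
  then obtain k where "k > 0" "(?p ^^ k) id = id"
    using funpow_inj_finite[OF inj] by blast
  then show ?thesis using pw that by (metis Suc_pred)
qed

lemma two_involutions:
  assumes "\<sigma> permutes S" "finite S"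
  obtains \<tau> where "\<forall>x. \<tau> (\<tau> x) = x" "\<forall>x. \<sigma> (\<tau> (\<sigma> (\<tau> x))) = x"
    "\<forall>x\<in>S. \<tau> x \<in> S" "\<forall>x. x \<notin> S \<longrightarrow> \<tau> x = x"
proof -
  obtain M where M: "\<sigma> ^^ Suc M = id" using perm_finite_order[OF assms] .
  define P where "P k = \<sigma> ^^ k" for k
  have Padd: "P a (P b x) = P (a + b) x" for a b x by (simp add: P_def funpow_add)
  have Pmul: "P (Suc M * a + b) x = P b x" for a b x
  proof -
    have "P (Suc M * a) = id" unfolding P_def
      by (metis M funpow_mult id_funpow)
    then show ?thesis by (metis Padd id_apply)
  qed
  have P1: "P 1 x = \<sigma> x" for x by (simp add: P_def)
  define Orb where "Orb y = range (\<lambda>k. P k y)" for y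
  define r where "r y = (SOME z. z \<in> Orb y)" for y
  have self: "y \<in> Orb y" for y unfolding Orb_def by (rule range_eqI[of _ _ 0]) (simp add: P_def)
  have OrbEq: "Orb z = Orb y" if zin: "z \<in> Orb y" for z y
  proof -
    obtain k where z: "z = P k y" using zin unfolding Orb_def by blast
    show ?thesis
    proof
      show "Orb z \<subseteq> Orb y" unfolding Orb_def z using Padd by auto
      show "Orb y \<subseteq> Orb z"
      proof
        fix w assume "w \<in> Orb y"
        then obtain j where w: "w = P j y" by (auto simp: Orb_def)
        have "w = P (j + M * k) z"
          unfolding w z Padd using Pmul[of k j y] by (simp add: algebra_simps)
        then show "w \<in> Orb z" by (auto simp: Orb_def)
      qed
    qed
  qed
  have r_in: "r y \<in> Orb y" for y unfolding r_def using self by (rule someI)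
  have r_eq: "r z = r y" if "z \<in> Orb y" for z y unfolding r_def OrbEq[OF that] ..
  have y_in: "y \<in> Orb (r y)" for y using OrbEq[OF r_in[of y]] self[of y] by simp
  define e where "e y = (SOME k. P k (r y) = y)" for y
  have e: "P (e y) (r y) = y" for y
    unfolding e_def by (rule someI_ex) (use y_in[of y] in \<open>auto simp: Orb_def intro: sym\<close>)
  define \<tau> where "\<tau> y = P (M * e y) (r y)" for y
  have inOrb: "P k (r y) \<in> Orb y" for k y
    using OrbEq[OF r_in[of y]] by (auto simp: Orb_def)
  have t1: "\<tau> (\<tau> y) = y" for y
  proof -
    define \<rho> where "\<rho> = r y"
    define k where "k = e y"
    define z where "z = \<tau> y"
    have rz: "r z = \<rho>" unfolding z_def \<tau>_def \<rho>_def by (rule r_eq[OF inOrb])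
    define j where "j = e z"
    have hj: "P j \<rho> = P (M * k) \<rho>" using e[of z] rz unfolding j_def z_def \<tau>_def k_def \<rho>_def by simp
    have "P (j + k) \<rho> = \<rho>"
    proof -
      have "P (j + k) \<rho> = P k (P j \<rho>)" by (simp add: Padd add.commute)
      also have "\<dots> = P (Suc M * k + 0) \<rho>" unfolding hj Padd by (simp add: algebra_simps)
      finally show ?thesis using Pmul[of k 0 \<rho>] by (simp add: P_def)
    qed
    then have "P (M * j) \<rho> = P (M * j) (P (j + k) \<rho>)" by simp
    also have "\<dots> = P (Suc M * j + k) \<rho>" unfolding Padd by (simp add: algebra_simps)
    also have "\<dots> = P k \<rho>" by (rule Pmul)
    finally have "\<tau> z = P k \<rho>" unfolding \<tau>_def rz j_def .
    then show ?thesis using e[of y] unfolding z_def k_def \<rho>_def by simp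
  qed
  have t2: "\<sigma> (\<tau> (\<sigma> (\<tau> y))) = y" for y
  proof -
    define \<rho> where "\<rho> = r y"
    define k where "k = e y"
    define z where "z = \<sigma> (\<tau> y)"
    have z': "z = P (1 + M * k) \<rho>" unfolding z_def \<tau>_def k_def \<rho>_def P1[symmetric] Padd ..
    have rz: "r z = \<rho>" unfolding z' \<rho>_def by (rule r_eq[OF inOrb])
    define j where "j = e z"
    have hj: "P j \<rho> = P (1 + M * k) \<rho>" using e[of z] rz z' unfolding j_def by simp
    have "P (j + k + M) \<rho> = \<rho>"
    proof -
      have "P (j + k + M) \<rho> = P (k + M) (P j \<rho>)" by (simp add: Padd algebra_simps)
      also have "\<dots> = P (Suc M * (Suc k) + 0) \<rho>" unfolding hj Padd by (simp add: algebra_simps)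
      finally show ?thesis using Pmul[of "Suc k" 0 \<rho>] by (simp add: P_def)
    qed
    then have "P (1 + M * j) \<rho> = P (1 + M * j) (P (j + k + M) \<rho>)" by simp
    also have "\<dots> = P (Suc M * Suc j + k) \<rho>" unfolding Padd by (simp add: algebra_simps)
    also have "\<dots> = P k \<rho>" by (rule Pmul)
    finally have "\<sigma> (\<tau> z) = P k \<rho>" unfolding \<tau>_def rz j_def P1[symmetric] Padd by simp
    then show ?thesis using e[of y] unfolding z_def k_def \<rho>_def by simp
  qed
  have t3: "\<tau> x \<in> S" if "x \<in> S" for x
  proof -
    have "r x \<in> S" using r_in[of x] permutes_in_funpow_image[OF assms(1) that]
      by (auto simp: Orb_def P_def)
    then show ?thesis unfolding \<tau>_def P_def by (rule permutes_in_funpow_image[OF assms(1)])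
  qed
  have t4: "\<tau> x = x" if "x \<notin> S" for x
  proof -
    have fix1: "P k x = x" for k
      using permutes_not_in[OF assms(1) that] by (induction k) (auto simp: P_def)
    then have "Orb x = {x}" by (auto simp: Orb_def)
    then have "r x = x" using r_in[of x] by simp
    then show ?thesis unfolding \<tau>_def using fix1 by simp
  qed
  show ?thesis using t1 t2 t3 t4 that by blast
qed


lemma map_layer_target:
  assumes "distinct (qubits (map (\<lambda>i. (f i, g i)) xs))" "i \<in> set xs"
  shows "layerf (map (\<lambda>i. (f i, g i)) xs) y (g i) = (y (g i) \<noteq> y (f i))"
  using assms by (intro layerf_target) auto

lemma map_layer_other:
  assumes "k \<notin> g ` set xs"
  shows "layerf (map (\<lambda>i. (f i, g i)) xs) y k = y k"
  using assms by (intro layerf_other) (auto simp: image_image)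

lemma layer_ok:
  assumes "distinct xs" "inj_on f (set xs)" "inj_on g (set xs)"
    "\<forall>i\<in>set xs. \<forall>j\<in>set xs. f i \<noteq> g j"
    "\<forall>i\<in>set xs. f i < N \<and> g i < N"
  shows "cnot_layer N (map (\<lambda>i. (f i, g i)) xs) \<and> distinct (qubits (map (\<lambda>i. (f i, g i)) xs))"
  using distinct_pairs[OF assms(1-4)] assms(5) by (auto simp: cnot_layer_def qubits_def)

definition invol :: "nat \<Rightarrow> (nat \<Rightarrow> nat) \<Rightarrow> bool" where
  "invol n \<tau> \<longleftrightarrow> (\<forall>x. \<tau> (\<tau> x) = x) \<and> (\<forall>x<n. \<tau> x < n) \<and> (\<forall>x\<ge>n. \<tau> x = x)"

definition LX :: "nat \<Rightarrow> (nat \<Rightarrow> nat) \<Rightarrow> (nat \<times> nat) list" where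
  "LX n \<tau> = map (\<lambda>i. (i, \<tau> i)) (filter (\<lambda>i. i < \<tau> i) [0..<n])"
definition LY :: "nat \<Rightarrow> (nat \<Rightarrow> nat) \<Rightarrow> (nat \<times> nat) list" where
  "LY n \<tau> = map (\<lambda>i. (\<tau> i, i)) (filter (\<lambda>i. i < \<tau> i) [0..<n])"

lemma swap_block:
  assumes "invol n \<tau>"
  shows "cnot_layer n (LX n \<tau>)" "cnot_layer n (LY n \<tau>)"
    "layerf (LX n \<tau>) (layerf (LY n \<tau>) (layerf (LX n \<tau>) y)) = y \<circ> \<tau>"
proof -
  have ii: "\<tau> (\<tau> x) = x" for x using assms by (simp add: invol_def)
  have inj: "inj_on \<tau> A" for A by (metis ii inj_onI)
  have inn: "x < n \<Longrightarrow> \<tau> x < n" for x using assms by (simp add: invol_def)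
  have fx: "x \<ge> n \<Longrightarrow> \<tau> x = x" for x using assms by (simp add: invol_def)
  let ?xs = "filter (\<lambda>i. i < \<tau> i) [0..<n]"
  have dis: "\<forall>i\<in>set ?xs. \<forall>j\<in>set ?xs. i \<noteq> \<tau> j" using ii by force
  have X: "cnot_layer n (LX n \<tau>) \<and> distinct (qubits (LX n \<tau>))"
    unfolding LX_def by (rule layer_ok) (use inj dis inn in auto)
  have Y: "cnot_layer n (LY n \<tau>) \<and> distinct (qubits (LY n \<tau>))"
    unfolding LY_def by (rule layer_ok) (use inj dis inn in \<open>auto simp: inj_on_def\<close>)
  show "cnot_layer n (LX n \<tau>)" "cnot_layer n (LY n \<tau>)" using X Y by auto
  have lx: "layerf (LX n \<tau>) z k = (if \<tau> k < k then z k \<noteq> z (\<tau> k) else z k)" for z k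
  proof (cases "\<tau> k < k")
    case True
    then have "k < n" using fx[of k] by (cases "k < n") auto
    then have "\<tau> k \<in> set ?xs" using True ii inn by auto
    then have "layerf (LX n \<tau>) z (\<tau> (\<tau> k)) = (z (\<tau> (\<tau> k)) \<noteq> z (\<tau> k))"
      using X unfolding LX_def by (intro map_layer_target) auto
    then show ?thesis using True ii by simp
  next
    case False
    have "k \<notin> \<tau> ` set ?xs" using False ii by force
    then show ?thesis using False unfolding LX_def by (simp add: map_layer_other)
  qed
  have ly: "layerf (LY n \<tau>) z k = (if k < \<tau> k then z k \<noteq> z (\<tau> k) else z k)" for z k
  proof (cases "k < \<tau> k")
    case True
    then have "k < n" using fx[of k] by (cases "k < n") auto
    then have "k \<in> set ?xs" using True by auto
    then have "layerf (LY n \<tau>) z k = (z k \<noteq> z (\<tau> k))"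
      using Y unfolding LY_def
      using map_layer_target[of \<tau> "\<lambda>i. i" ?xs k z] by auto
    then show ?thesis using True by simp
  next
    case False
    have "k \<notin> set ?xs" using False by auto
    then show ?thesis using False unfolding LY_def
      using map_layer_other[of k "\<lambda>i. i" ?xs \<tau> z] by simp
  qed
  show "layerf (LX n \<tau>) (layerf (LY n \<tau>) (layerf (LX n \<tau>) y)) = y \<circ> \<tau>"
  proof
    fix k
    consider "\<tau> k < k" | "k < \<tau> k" | "\<tau> k = k" by linarith
    then show "layerf (LX n \<tau>) (layerf (LY n \<tau>) (layerf (LX n \<tau>) y)) k = (y \<circ> \<tau>) k"
    proof cases
      case 1
      then have "\<not> \<tau> (\<tau> k) < \<tau> k" "\<tau> k < \<tau> (\<tau> k)" using ii by auto
      then show ?thesis using 1 by (simp add: lx ly ii) blast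
    next
      case 2
      then have "\<tau> (\<tau> k) < \<tau> k" "\<not> \<tau> k < \<tau> (\<tau> k)" using ii by auto
      then show ?thesis using 2 by (simp add: lx ly ii) blast
    next
      case 3
      then show ?thesis by (simp add: lx ly)
    qed
  qed
qed


lemma part2:
  assumes "\<sigma> permutes {..<n}"
  shows "\<exists>Ls. length Ls = 6 \<and> (\<forall>L\<in>set Ls. cnot_layer n L)
            \<and> (\<forall>x\<in>basis n. \<forall>y\<in>basis n. circuit_op n Ls x y = perm_op n \<sigma> x y)"
proof -
  obtain \<tau> where t1: "\<forall>x. \<tau> (\<tau> x) = x" and t2: "\<forall>x. \<sigma> (\<tau> (\<sigma> (\<tau> x))) = x"
    and t3: "\<forall>x\<in>{..<n}. \<tau> x \<in> {..<n}" and t4: "\<forall>x. x \<notin> {..<n} \<longrightarrow> \<tau> x = x"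
    using two_involutions[OF assms] by blast
  have sin: "x < n \<Longrightarrow> \<sigma> x < n" for x using permutes_in_image[OF assms] by auto
  have sout: "x \<ge> n \<Longrightarrow> \<sigma> x = x" for x using permutes_not_in[OF assms] by auto
  have i1: "invol n \<tau>" using t1 t3 t4 by (auto simp: invol_def)
  define \<tau>2 where "\<tau>2 = \<sigma> \<circ> \<tau>"
  have i2: "invol n \<tau>2" using t2 t3 t4 sin sout by (auto simp: invol_def \<tau>2_def)
  have t5: "\<tau> (\<sigma> (\<tau> (\<sigma> x))) = x" for x
  proof -
    have "\<sigma> (\<tau> (\<sigma> (\<tau> (\<tau> x)))) = \<tau> x" using t2 by blast
    then show ?thesis using t1 by metis
  qed
  have invs: "inv \<sigma> = \<tau> \<circ> \<sigma> \<circ> \<tau>"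
    by (rule inv_unique_comp) (use t2 t5 in \<open>auto simp: fun_eq_iff\<close>)
  define Ls where "Ls = [LX n \<tau>2, LY n \<tau>2, LX n \<tau>2, LX n \<tau>, LY n \<tau>, LX n \<tau>]"
  have lay: "\<forall>L\<in>set Ls. cnot_layer n L" using swap_block[OF i1] swap_block[OF i2]
    by (auto simp: Ls_def)
  have cf: "circf Ls y = (\<lambda>i. y (inv \<sigma> i))" for y
  proof -
    have "circf Ls y = layerf (LX n \<tau>2) (layerf (LY n \<tau>2) (layerf (LX n \<tau>2)
        (layerf (LX n \<tau>) (layerf (LY n \<tau>) (layerf (LX n \<tau>) y)))))"
      by (simp add: Ls_def circf_def)
    also have "\<dots> = (y \<circ> \<tau>) \<circ> \<tau>2" by (simp add: swap_block(3)[OF i1] swap_block(3)[OF i2])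
    finally show ?thesis by (simp add: invs \<tau>2_def comp_def)
  qed
  have "repr n (circuit_op n Ls) (circf Ls)" using circ_repr[OF lay] by blast
  then have "\<forall>x\<in>basis n. \<forall>y\<in>basis n. circuit_op n Ls x y = perm_op n \<sigma> x y"
    by (auto simp: repr_def perm_op_def cf)
  then show ?thesis using lay by (intro exI[of _ Ls]) (auto simp: Ls_def)
qed


lemma part1:
  assumes "\<sigma> permutes {..<n}"
  shows "\<exists>Ls. length Ls = 4 \<and> (\<forall>L\<in>set Ls. cnot_layer (n + n) L)
            \<and> embeds n n (circuit_op (n + n) Ls) (perm_op n \<sigma>)"
proof -
  have sin: "x < n \<Longrightarrow> \<sigma> x < n" for x using permutes_in_image[OF assms] by auto
  have sout: "x \<ge> n \<Longrightarrow> \<sigma> x = x" for x using permutes_not_in[OF assms] by auto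
  have iin: "x < n \<Longrightarrow> inv \<sigma> x < n" for x
    using permutes_in_image[OF permutes_inv[OF assms]] by auto
  have iout: "x \<ge> n \<Longrightarrow> inv \<sigma> x = x" for x using permutes_not_in[OF permutes_inv[OF assms]] by auto
  have sinv: "\<sigma> (inv \<sigma> x) = x" for x using permutes_inverses(1)[OF assms] .
  have inj\<sigma>: "inj_on \<sigma> A" for A using permutes_inj[OF assms] by (rule inj_on_subset) auto
  define A where "A = map (\<lambda>i. (i, n + \<sigma> i)) [0..<n]"
  define B where "B = map (\<lambda>i. (n + \<sigma> i, i)) [0..<n]"
  define C where "C = map (\<lambda>i. (n + i, i)) [0..<n]"
  define D where "D = map (\<lambda>i. (i, n + i)) [0..<n]"
  have hA: "cnot_layer (n+n) A \<and> distinct (qubits A)" unfolding A_def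
    by (rule layer_ok) (use sin inj\<sigma> in \<open>auto simp: inj_on_def\<close>)
  have hB: "cnot_layer (n+n) B \<and> distinct (qubits B)" unfolding B_def
    by (rule layer_ok) (use sin inj\<sigma> in \<open>auto simp: inj_on_def\<close>)
  have hC: "cnot_layer (n+n) C \<and> distinct (qubits C)" unfolding C_def
    by (rule layer_ok) (auto simp: inj_on_def)
  have hD: "cnot_layer (n+n) D \<and> distinct (qubits D)" unfolding D_def
    by (rule layer_ok) (auto simp: inj_on_def)
  have a1: "i < n \<Longrightarrow> layerf A z (n + \<sigma> i) = (z (n + \<sigma> i) \<noteq> z i)" for z i
    using hA unfolding A_def by (intro map_layer_target) auto
  have a2: "k < n \<or> k \<ge> n + n \<Longrightarrow> layerf A z k = z k" for z k
    unfolding A_def by (rule map_layer_other) (use sin in force)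
  have b1: "i < n \<Longrightarrow> layerf B z i = (z i \<noteq> z (n + \<sigma> i))" for z i
    using hB unfolding B_def using map_layer_target[of "\<lambda>i. n + \<sigma> i" "\<lambda>i. i" "[0..<n]" i z] by auto
  have b2: "k \<ge> n \<Longrightarrow> layerf B z k = z k" for z k
    unfolding B_def using map_layer_other[of k "\<lambda>i. i" "[0..<n]" "\<lambda>i. n + \<sigma> i" z] by auto
  have c1: "i < n \<Longrightarrow> layerf C z i = (z i \<noteq> z (n + i))" for z i
    using hC unfolding C_def using map_layer_target[of "\<lambda>i. n + i" "\<lambda>i. i" "[0..<n]" i z] by auto
  have c2: "k \<ge> n \<Longrightarrow> layerf C z k = z k" for z k
    unfolding C_def using map_layer_other[of k "\<lambda>i. i" "[0..<n]" "\<lambda>i. n + i" z] by auto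
  have d1: "i < n \<Longrightarrow> layerf D z (n + i) = (z (n + i) \<noteq> z i)" for z i
    using hD unfolding D_def by (intro map_layer_target) auto
  have d2: "k < n \<or> k \<ge> n + n \<Longrightarrow> layerf D z k = z k" for z k
    unfolding D_def by (rule map_layer_other) force
  define Ls where "Ls = [D, C, B, A]"
  have lay: "\<forall>L\<in>set Ls. cnot_layer (n + n) L" using hA hB hC hD by (auto simp: Ls_def)
  have cf: "circf Ls y = (\<lambda>i. y (inv \<sigma> i))" if y: "y \<in> basis n" for y
  proof
    fix k
    have y0: "m \<ge> n \<Longrightarrow> \<not> y m" for m using y by (auto simp: basis_def)
    let ?s1 = "layerf A y" let ?s2 = "layerf B ?s1" let ?s3 = "layerf C ?s2"
    have e: "circf Ls y = layerf D ?s3" by (simp add: Ls_def circf_def)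
    have s2lo: "?s2 j = False" if "j < n" for j
      using b1[OF that, of ?s1] a2[of j y] a1[OF that, of y] y0[of "n + \<sigma> j"] that by auto
    have s2hi: "?s2 (n + j) = y (inv \<sigma> j)" if "j < n" for j
    proof -
      have "?s2 (n + j) = ?s1 (n + \<sigma> (inv \<sigma> j))" using b2[of "n+j" ?s1] sinv[of j] by simp
      also have "\<dots> = y (inv \<sigma> j)" using a1[OF iin[OF that], of y] y0[of "n + \<sigma> (inv \<sigma> j)"] by simp
      finally show ?thesis .
    qed
    have s3lo: "?s3 j = y (inv \<sigma> j)" if "j < n" for j
      using c1[OF that, of ?s2] s2lo[OF that] s2hi[OF that] by simp
    consider "k < n" | j where "j < n" "k = n + j" | "k \<ge> n + n"
      by (metis add_diff_inverse_nat nat_add_left_cancel_less not_le)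
    then show "circf Ls y k = y (inv \<sigma> k)"
    proof cases
      case 1 then show ?thesis using e d2[of k ?s3] s3lo by simp
    next
      case 2
      have "layerf D ?s3 (n + j) = False"
        using d1[OF 2(1), of ?s3] c2[of "n + j" ?s2] s2hi[OF 2(1)] s3lo[OF 2(1)] by simp
      then show ?thesis using e 2 iout[of k] y0[of k] by simp
    next
      case 3
      then have "circf Ls y k = y k"
        using e d2[of k ?s3] c2[of k ?s2] b2[of k ?s1] a2[of k y] by simp
      then show ?thesis using 3 iout[of k] by simp
    qed
  qed
  have rep: "repr (n + n) (circuit_op (n + n) Ls) (circf Ls)" using circ_repr[OF lay] by blast
  have bsub: "basis n \<subseteq> basis (n + n)" by (auto simp: basis_def)
  have pb: "(\<lambda>i. y (inv \<sigma> i)) \<in> basis n" if "y \<in> basis n" for y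
    using that iout by (auto simp: basis_def)
  have "embeds n n (circuit_op (n + n) Ls) (perm_op n \<sigma>)"
    unfolding embeds_def
  proof (intro allI ballI)
    fix \<psi> and x :: bits assume x: "x \<in> basis (n + n)"
    have "op_apply (n + n) (circuit_op (n + n) Ls) (with_zero_ancillae n \<psi>) x
        = (\<Sum>y\<in>basis (n + n). if y \<in> basis n then (if x = (\<lambda>i. y (inv \<sigma> i)) then 1 else 0) * \<psi> y else 0)"
      unfolding op_apply_def
      by (rule sum.cong) (use rep x cf in \<open>auto simp: repr_def with_zero_ancillae_def basis_def\<close>)
    also have "\<dots> = (\<Sum>y\<in>basis n. (if x = (\<lambda>i. y (inv \<sigma> i)) then 1 else 0) * \<psi> y)"
      using finite_basis bsub by (simp add: sum.inter_filter[symmetric] Int_absorb1 Collect_mem_eq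
          flip: Int_def) 
    also have "\<dots> = with_zero_ancillae n (op_apply n (perm_op n \<sigma>) \<psi>) x"
    proof (cases "x \<in> basis n")
      case True then show ?thesis
        by (simp add: with_zero_ancillae_def op_apply_def perm_op_def basis_def)
    next
      case False
      then have "(\<Sum>y\<in>basis n. (if x = (\<lambda>i. y (inv \<sigma> i)) then 1 else 0) * \<psi> y) = 0"
        using pb by (intro sum.neutral) auto
      then show ?thesis using False by (auto simp: with_zero_ancillae_def basis_def)
    qed
    finally show "op_apply (n + n) (circuit_op (n + n) Ls) (with_zero_ancillae n \<psi>) x
        = with_zero_ancillae n (op_apply n (perm_op n \<sigma>) \<psi>) x" .
  qed
  then show ?thesis using lay by (intro exI[of _ Ls]) (auto simp: Ls_def)
qed

theorem proposition1:
  fixes n :: nat and \<sigma> :: "nat \<Rightarrow> nat"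
  assumes "n \<ge> 1" and "\<sigma> permutes {..<n}"
  shows "(\<exists>Ls. length Ls = 4 \<and> (\<forall>L\<in>set Ls. cnot_layer (n + n) L)
            \<and> embeds n n (circuit_op (n + n) Ls) (perm_op n \<sigma>))
       \<and> (\<exists>Ls. length Ls = 6 \<and> (\<forall>L\<in>set Ls. cnot_layer n L)
            \<and> (\<forall>x\<in>basis n. \<forall>y\<in>basis n. circuit_op n Ls x y = perm_op n \<sigma> x y))"
  using part1[OF assms(2)] part2[OF assms(2)] by blast

end
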